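(* Let $H_0,H_1$ be complex Hilbert spaces, $G$ a densely defined closed operator from $H_0$ into $H_1$ and $D$ a densely defined closed operator from $H_1$ into $H_0$ with $-G^*\subset D$. Let $m\in\mathcal L(H_0)$ (not necessarily coercive) and let $a\in\mathcal L(H_1)$ be coercive. Let $\mathring T\in\mathcal L(\mathrm{dom}(\mathring G))$ be defined by $(\mathring Tu,v)_{\mathrm{dom}(\mathring G)}=(aGu,Gv)_{H_1}+(mu,v)_{H_0}$ for all $u,v\in\mathrm{dom}(\mathring G)$, and suppose $\mathrm{ran}(\mathring T)$ is closed in $\mathrm{dom}(\mathring G)$. Then the Dirichlet-to-Neumann graph $\Lambda$ associated with $-DaG+m$ satisfies \[ \mathrm{dom}(\Lambda)=\{u_0\in\mathrm{BD}(G):\big(\Phi(\pi_{\mathrm{BD}(D)}a^*Gv)\big)(u_0)=0\text{ for all }v\in\ker(m^*-Da^*\mathring G)\}, \] where $\Phi\colon\mathrm{BD}(D)\to\mathrm{BD}(G)'$ is given by $(\Phi(q))(u)=(Dq,u)_{H_0}+(q,Gu)_{H_1}$.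
   Context: $\mathring D=-G^*$, $\mathring G=-D^*$. Domains carry graph inner products. $\mathrm{BD}(G)$ (resp. $\mathrm{BD}(D)$) is the orthogonal complement of $\mathrm{dom}(\mathring G)$ in $\mathrm{dom}(G)$ (resp. of $\mathrm{dom}(\mathring D)$ in $\mathrm{dom}(D)$) with induced inner products; $\pi_{\mathrm{BD}(G)},\pi_{\mathrm{BD}(D)}$ the orthogonal projections. $\mathrm{BD}(G)'$ is the space of continuous antilinear functionals on $\mathrm{BD}(G)$. Coercive: $\mathrm{Re}(ax,x)\ge\mu\|x\|^2$ for some $\mu>0$. The Dirichlet-to-Neumann graph is $\Lambda=\{(\pi_{\mathrm{BD}(G)}u,\pi_{\mathrm{BD}(D)}aGu): u\in\mathrm{dom}(G),\ aGu\in\mathrm{dom}(D),\ mu-DaGu=0\}$, $\mathrm{dom}(\Lambda)$ the set of first components. $\ker(m^*-Da^*\mathring G)=\{v\in\mathrm{dom}(\mathring G):a^*\mathring Gv\in\mathrm{dom}(D),\ m^*v=Da^*\mathring Gv\}$. *)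

theory Defs
  imports "HOL-Analysis.Analysis"
begin

class complex_vector = real_vector +
  fixes scaleC :: "complex \<Rightarrow> 'a \<Rightarrow> 'a"
  assumes scaleC_add_right: "scaleC c (x + y) = scaleC c x + scaleC c y"
    and scaleC_add_left: "scaleC (b + c) x = scaleC b x + scaleC c x"
    and scaleC_scaleC: "scaleC b (scaleC c x) = scaleC (b * c) x"
    and scaleC_one: "scaleC 1 x = x"
    and scaleR_scaleC: "scaleR r x = scaleC (complex_of_real r) x"

class complex_inner = complex_vector + real_normed_vector +
  fixes cinner :: "'a \<Rightarrow> 'a \<Rightarrow> complex"
  assumes cinner_commute: "cinner x y = cnj (cinner y x)"
    and cinner_add_left: "cinner (x + y) z = cinner x z + cinner y z"
    and cinner_scaleC_left: "cinner (scaleC c x) y = c * cinner x y"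
    and cinner_nonneg: "0 \<le> Re (cinner x x)"
    and cinner_eq_zero_iff: "cinner x x = 0 \<longleftrightarrow> x = 0"
    and norm_eq_sqrt_cinner: "norm x = sqrt (Re (cinner x x))"

class chilbert = complex_inner + complete_space

definition clinear :: "('a::complex_vector \<Rightarrow> 'b::complex_vector) \<Rightarrow> bool" where
  "clinear f \<longleftrightarrow> (\<forall>x y. f (x + y) = f x + f y) \<and> (\<forall>c x. f (scaleC c x) = scaleC c (f x))"

definition bounded_clinear :: "('a::complex_inner \<Rightarrow> 'b::complex_inner) \<Rightarrow> bool" where
  "bounded_clinear f \<longleftrightarrow> clinear f \<and> (\<exists>K. \<forall>x. norm (f x) \<le> norm x * K)"

definition badj :: "('a::complex_inner \<Rightarrow> 'b::complex_inner) \<Rightarrow> 'b \<Rightarrow> 'a" where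
  "badj f y = (THE z. \<forall>x. cinner (f x) y = cinner x z)"

definition coercive :: "('a::complex_inner \<Rightarrow> 'a) \<Rightarrow> bool" where
  "coercive a \<longleftrightarrow> (\<exists>\<mu>>0. \<forall>x. Re (cinner (a x) x) \<ge> \<mu> * (norm x)\<^sup>2)"

section \<open>Unbounded operators, given by a domain and a function\<close>

definition csubspace :: "'a::complex_vector set \<Rightarrow> bool" where
  "csubspace S \<longleftrightarrow> 0 \<in> S \<and> (\<forall>x\<in>S. \<forall>y\<in>S. x + y \<in> S) \<and> (\<forall>c. \<forall>x\<in>S. scaleC c x \<in> S)"

definition lin_op :: "'a::complex_vector set \<Rightarrow> ('a \<Rightarrow> 'b::complex_vector) \<Rightarrow> bool" where
  "lin_op S f \<longleftrightarrow> csubspace S \<and> (\<forall>x\<in>S. \<forall>y\<in>S. f (x + y) = f x + f y)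
     \<and> (\<forall>c. \<forall>x\<in>S. f (scaleC c x) = scaleC c (f x))"

definition op_graph :: "'a set \<Rightarrow> ('a \<Rightarrow> 'b) \<Rightarrow> ('a \<times> 'b) set" where
  "op_graph S f = (\<lambda>x. (x, f x)) ` S"

definition closed_op :: "'a::real_normed_vector set \<Rightarrow> ('a \<Rightarrow> 'b::real_normed_vector) \<Rightarrow> bool" where
  "closed_op S f \<longleftrightarrow> closed (op_graph S f)"

definition densely_defined :: "'a::topological_space set \<Rightarrow> bool" where
  "densely_defined S \<longleftrightarrow> closure S = UNIV"

definition adj_dom :: "'a::complex_inner set \<Rightarrow> ('a \<Rightarrow> 'b::complex_inner) \<Rightarrow> 'b set" where
  "adj_dom S f = {y. \<exists>z. \<forall>x\<in>S. cinner (f x) y = cinner x z}"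

definition adj_op :: "'a::complex_inner set \<Rightarrow> ('a \<Rightarrow> 'b::complex_inner) \<Rightarrow> 'b \<Rightarrow> 'a" where
  "adj_op S f y = (THE z. \<forall>x\<in>S. cinner (f x) y = cinner x z)"

definition ginner :: "('a::complex_inner \<Rightarrow> 'b::complex_inner) \<Rightarrow> 'a \<Rightarrow> 'a \<Rightarrow> complex" where
  "ginner f u v = cinner u v + cinner (f u) (f v)"

definition bd :: "'a::complex_inner set \<Rightarrow> ('a \<Rightarrow> 'b::complex_inner) \<Rightarrow> 'a set \<Rightarrow> 'a set" where
  "bd S f R = {u \<in> S. \<forall>v\<in>R. ginner f u v = 0}"

definition bd_proj :: "'a::complex_inner set \<Rightarrow> ('a \<Rightarrow> 'b::complex_inner) \<Rightarrow> 'a \<Rightarrow> 'a" where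
  "bd_proj B f u = (THE w. w \<in> B \<and> (\<forall>v\<in>B. ginner f (u - w) v = 0))"

end

theory Submission
  imports Defs
begin

lemma scaleC_zero_right[simp]: "scaleC c (0::'a::complex_vector) = 0"
proof -
  have "scaleC c (0+0::'a) = scaleC c 0 + scaleC c 0" by (rule scaleC_add_right)
  then show ?thesis by simp
qed

lemma scaleC_zero_left[simp]: "scaleC 0 (x::'a::complex_vector) = 0"
  using scaleR_scaleC[of 0 x] by simp

lemma scaleC_minus_right: "scaleC c (- x::'a::complex_vector) = - scaleC c x"
proof -
  have "scaleC c (- x + x) = scaleC c (-x) + scaleC c x" by (rule scaleC_add_right)
  then have "scaleC c (-x) + scaleC c x = 0" by simp
  then show ?thesis by (simp add: eq_neg_iff_add_eq_0)
qed

lemma scaleC_diff_right: "scaleC c (x - y::'a::complex_vector) = scaleC c x - scaleC c y"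
  using scaleC_add_right[of c x "- y"] by (simp add: scaleC_minus_right)

lemma scaleC_minus1: "scaleC (-1) (x::'a::complex_vector) = - x"
  using scaleR_scaleC[of "-1" x] by simp

lemma cinner_add_right: "cinner x (y + z) = cinner x y + cinner (x::'a::complex_inner) z"
proof -
  have "cinner x (y + z) = cnj (cinner (y + z) x)" by (rule cinner_commute)
  also have "\<dots> = cnj (cinner y x) + cnj (cinner z x)" by (simp add: cinner_add_left)
  also have "\<dots> = cinner x y + cinner x z" by (simp add: cinner_commute[of x y] cinner_commute[of x z])
  finally show ?thesis .
qed

lemma cinner_scaleC_right: "cinner x (scaleC c y) = cnj c * cinner (x::'a::complex_inner) y"
proof -
  have "cinner x (scaleC c y) = cnj (cinner (scaleC c y) x)" by (rule cinner_commute)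
  also have "\<dots> = cnj c * cnj (cinner y x)" by (simp add: cinner_scaleC_left)
  also have "\<dots> = cnj c * cinner x y" by (simp add: cinner_commute[of x y])
  finally show ?thesis .
qed

lemma cinner_zero_left[simp]: "cinner 0 (x::'a::complex_inner) = 0"
  using cinner_scaleC_left[of 0 0 x] by simp

lemma cinner_zero_right[simp]: "cinner (x::'a::complex_inner) 0 = 0"
  using cinner_scaleC_right[of x 0 0] by simp

lemma cinner_minus_left: "cinner (- x) (y::'a::complex_inner) = - cinner x y"
  using cinner_scaleC_left[of "-1" x y] by (simp add: scaleC_minus1)

lemma cinner_minus_right: "cinner x (- y::'a::complex_inner) = - cinner x y"
  using cinner_scaleC_right[of x "-1" y] by (simp add: scaleC_minus1)

lemma cinner_diff_left: "cinner (x - y) (z::'a::complex_inner) = cinner x z - cinner y z"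
  using cinner_add_left[of x "-y" z] by (simp add: cinner_minus_left)

lemma cinner_diff_right: "cinner x (y - z::'a::complex_inner) = cinner x y - cinner x z"
  using cinner_add_right[of x y "-z"] by (simp add: cinner_minus_right)

lemma cinner_self: "cinner x (x::'a::complex_inner) = complex_of_real ((norm x)\<^sup>2)"
proof -
  have "Im (cinner x x) = 0" using cinner_commute[of x x] by (metis cnj.sel(2) neg_equal_zero)
  moreover have "Re (cinner x x) = (norm x)\<^sup>2" by (simp add: norm_eq_sqrt_cinner cinner_nonneg)
  ultimately show ?thesis by (simp add: complex_eq_iff)
qed

lemma cinner_self_eq_0: "cinner x x = 0 \<longleftrightarrow> (x::'a::complex_inner) = 0"
  by (rule cinner_eq_zero_iff)

lemma cs_identity:
  fixes x y :: "'a::complex_inner"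
  assumes False: "y \<noteq> 0"
  shows "(norm (x - scaleC (cinner x y / complex_of_real ((norm y)\<^sup>2)) y))\<^sup>2
       = (norm x)\<^sup>2 - (cmod (cinner x y))\<^sup>2 / (norm y)\<^sup>2"
proof -
  define c where "c = cinner x y"
  define n where "n = (norm y)\<^sup>2"
  have n0: "n > 0" using False by (simp add: n_def)
  define t where "t = c / complex_of_real n"
  have cyx: "cinner y x = cnj c" by (simp add: c_def cinner_commute[of y x])
  have "cinner (x - scaleC t y) (x - scaleC t y)
     = cinner x x - cnj t * c - t * cnj c + t * cnj t * complex_of_real n"
    by (simp add: cinner_diff_left cinner_diff_right cinner_scaleC_left cinner_scaleC_right
        c_def[symmetric] cyx cinner_self[of y] n_def algebra_simps)
  also have "\<dots> = complex_of_real ((norm x)\<^sup>2 - (cmod c)\<^sup>2 / n)"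
  proof -
    define N where "N = c * cnj c"
    have N: "N = complex_of_real ((cmod c)\<^sup>2)" unfolding N_def by (rule complex_norm_square[symmetric])
    have nz: "complex_of_real n \<noteq> 0" using n0 by simp
    have ct: "cnj t = cnj c / complex_of_real n" by (simp add: t_def)
    have f1: "\<And>a b z::complex. a / z * b = b * a / z" by simp
    have f2: "\<And>a b z::complex. a / z * b = a * b / z" by simp
    have f3: "\<And>a b z::complex. z \<noteq> 0 \<Longrightarrow> a / z * (b / z) * z = a * b / z" by (simp add: field_simps)
    have 1: "cnj t * c = N / complex_of_real n" unfolding ct N_def by (rule f1)
    have 2: "t * cnj c = N / complex_of_real n" unfolding t_def N_def by (rule f2)
    have 3: "t * cnj t * complex_of_real n = N / complex_of_real n"
      unfolding ct unfolding t_def N_def using nz by (rule f3)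
    have 4: "cinner x x = complex_of_real ((norm x)\<^sup>2)" by (rule cinner_self)
    show ?thesis unfolding 1 2 3 N 4 by (simp only: of_real_diff of_real_divide diff_add_cancel)
  qed
  finally have E: "cinner (x - scaleC t y) (x - scaleC t y) = complex_of_real ((norm x)\<^sup>2 - (cmod c)\<^sup>2 / n)" .
  then have "complex_of_real ((norm (x - scaleC t y))\<^sup>2) = complex_of_real ((norm x)\<^sup>2 - (cmod c)\<^sup>2 / n)"
    unfolding cinner_self .
  then have "(norm (x - scaleC t y))\<^sup>2 = (norm x)\<^sup>2 - (cmod c)\<^sup>2 / n" by (simp only: of_real_eq_iff)
  then show ?thesis unfolding t_def c_def n_def .
qed

lemma cauchy_schwarz: "norm (cinner x y) \<le> norm x * norm (y::'a::complex_inner)"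
proof (cases "y = 0")
  case True then show ?thesis by simp
next
  case False
  define c where "c = cinner x y"
  define n where "n = (norm y)\<^sup>2"
  have n0: "n > 0" using False by (simp add: n_def)
  define t where "t = c / complex_of_real n"
  have cyx: "cinner y x = cnj c" by (simp add: c_def cinner_commute[of y x])
  have "cinner (x - scaleC t y) (x - scaleC t y)
     = cinner x x - cnj t * c - t * cnj c + t * cnj t * complex_of_real n"
    by (simp add: cinner_diff_left cinner_diff_right cinner_scaleC_left cinner_scaleC_right
        c_def[symmetric] cyx cinner_self[of y] n_def algebra_simps)
  also have "\<dots> = complex_of_real ((norm x)\<^sup>2 - (cmod c)\<^sup>2 / n)"
  proof -
    define N where "N = c * cnj c"
    have N: "N = complex_of_real ((cmod c)\<^sup>2)" unfolding N_def by (rule complex_norm_square[symmetric])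
    have nz: "complex_of_real n \<noteq> 0" using n0 by simp
    have ct: "cnj t = cnj c / complex_of_real n" by (simp add: t_def)
    have f1: "\<And>a b z::complex. a / z * b = b * a / z" by simp
    have f2: "\<And>a b z::complex. a / z * b = a * b / z" by simp
    have f3: "\<And>a b z::complex. z \<noteq> 0 \<Longrightarrow> a / z * (b / z) * z = a * b / z" by (simp add: field_simps)
    have 1: "cnj t * c = N / complex_of_real n" unfolding ct N_def by (rule f1)
    have 2: "t * cnj c = N / complex_of_real n" unfolding t_def N_def by (rule f2)
    have 3: "t * cnj t * complex_of_real n = N / complex_of_real n"
      unfolding ct unfolding t_def N_def using nz by (rule f3)
    have 4: "cinner x x = complex_of_real ((norm x)\<^sup>2)" by (rule cinner_self)
    show ?thesis unfolding 1 2 3 N 4 by (simp only: of_real_diff of_real_divide diff_add_cancel)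
  qed
  finally have E: "cinner (x - scaleC t y) (x - scaleC t y) = complex_of_real ((norm x)\<^sup>2 - (cmod c)\<^sup>2 / n)" .
  have "0 \<le> Re (cinner (x - scaleC t y) (x - scaleC t y))" by (rule cinner_nonneg)
  then have "0 \<le> (norm x)\<^sup>2 - (cmod c)\<^sup>2 / n" unfolding E by simp
  then have "(cmod c)\<^sup>2 \<le> (norm x)\<^sup>2 * (norm y)\<^sup>2" using n0 by (simp add: n_def divide_simps mult.commute)
  then have "(cmod c)\<^sup>2 \<le> (norm x * norm y)\<^sup>2" by (simp add: power_mult_distrib)
  then show ?thesis unfolding c_def by (rule power2_le_imp_le) simp
qed

lemma bounded_bilinear_cinner: "bounded_bilinear (cinner :: 'a::complex_inner \<Rightarrow> 'a \<Rightarrow> complex)"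
proof
  fix a a' b b' :: 'a and r :: real
  show "cinner (a + a') b = cinner a b + cinner a' b" by (rule cinner_add_left)
  show "cinner a (b + b') = cinner a b + cinner a b'" by (rule cinner_add_right)
  show "cinner (scaleR r a) b = scaleR r (cinner a b)"
    by (simp add: scaleR_scaleC cinner_scaleC_left scaleR_conv_of_real)
  show "cinner a (scaleR r b) = scaleR r (cinner a b)"
    by (simp add: scaleR_scaleC cinner_scaleC_right scaleR_conv_of_real)
  show "\<exists>K. \<forall>a b::'a. norm (cinner a b) \<le> norm a * norm b * K"
    by (rule exI[of _ 1]) (simp add: cauchy_schwarz)
qed

lemmas tendsto_cinner = bounded_bilinear.tendsto[OF bounded_bilinear_cinner]
lemmas continuous_cinner = bounded_bilinear.continuous[OF bounded_bilinear_cinner]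

instantiation prod :: (complex_vector, complex_vector) complex_vector
begin
definition scaleC_prod_def: "scaleC c x = (scaleC c (fst x), scaleC c (snd x))"
instance
proof
  fix a b :: complex and x y :: "'a \<times> 'b" and r :: real
  show "scaleC a (x + y) = scaleC a x + scaleC a y"
    by (simp add: scaleC_prod_def scaleC_add_right)
  show "scaleC (a + b) x = scaleC a x + scaleC b x"
    by (simp add: scaleC_prod_def scaleC_add_left)
  show "scaleC a (scaleC b x) = scaleC (a * b) x"
    by (simp add: scaleC_prod_def scaleC_scaleC)
  show "scaleC 1 x = x" by (simp add: scaleC_prod_def scaleC_one)
  show "scaleR r x = scaleC (complex_of_real r) x"
    by (simp add: scaleC_prod_def scaleR_prod_def scaleR_scaleC)
qed
end

lemma scaleC_Pair[simp]: "scaleC c (a, b) = (scaleC c a, scaleC c b)"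
  by (simp add: scaleC_prod_def)

instantiation prod :: (complex_inner, complex_inner) complex_inner
begin
definition cinner_prod_def: "cinner x y = cinner (fst x) (fst y) + cinner (snd x) (snd y)"
instance
proof
  fix x y z :: "'a \<times> 'b" and c :: complex
  show "cinner x y = cnj (cinner y x)"
    by (simp add: cinner_prod_def cinner_commute[of "fst x"] cinner_commute[of "snd x"])
  show "cinner (x + y) z = cinner x z + cinner y z"
    by (simp add: cinner_prod_def cinner_add_left)
  show "cinner (scaleC c x) y = c * cinner x y"
    by (simp add: cinner_prod_def scaleC_prod_def cinner_scaleC_left algebra_simps)
  show "0 \<le> Re (cinner x x)"
    by (simp add: cinner_prod_def cinner_self)
  show "(cinner x x = 0) = (x = 0)"
  proof
    assume "cinner x x = 0"
    moreover have "cinner x x = complex_of_real ((norm (fst x))\<^sup>2 + (norm (snd x))\<^sup>2)"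
      by (simp only: cinner_prod_def cinner_self of_real_add)
    ultimately have "(norm (fst x))\<^sup>2 + (norm (snd x))\<^sup>2 = 0"
      by (simp only: of_real_eq_0_iff)
    then have "fst x = 0" "snd x = 0"
      by (simp_all add: add_nonneg_eq_0_iff)
    then show "x = 0" by (simp add: prod_eq_iff)
  qed (simp add: cinner_prod_def)
  show "norm x = sqrt (Re (cinner x x))"
    by (simp add: cinner_prod_def cinner_self norm_prod_def)
qed
end

lemma cinner_Pair[simp]: "cinner (a, b) (c, d) = cinner a c + cinner b d"
  by (simp add: cinner_prod_def)

instance prod :: (chilbert, chilbert) chilbert ..

lemma csub_0: "csubspace S \<Longrightarrow> 0 \<in> S" by (simp add: csubspace_def)
lemma csub_add: "csubspace S \<Longrightarrow> x \<in> S \<Longrightarrow> y \<in> S \<Longrightarrow> x + y \<in> S" by (simp add: csubspace_def)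
lemma csub_scaleC: "csubspace S \<Longrightarrow> x \<in> S \<Longrightarrow> scaleC c x \<in> S" by (simp add: csubspace_def)
lemma csub_minus: "csubspace S \<Longrightarrow> x \<in> S \<Longrightarrow> - x \<in> S"
  using csub_scaleC[of S x "-1"] by (simp add: scaleC_minus1)
lemma csub_diff: "csubspace S \<Longrightarrow> x \<in> S \<Longrightarrow> y \<in> S \<Longrightarrow> x - y \<in> S"
  using csub_add[of S x "-y"] csub_minus[of S y] by simp
lemma csub_scaleR: "csubspace S \<Longrightarrow> x \<in> S \<Longrightarrow> scaleR r x \<in> S"
  by (simp add: scaleR_scaleC csub_scaleC)

lemma norm_sq_Re: "(norm x)\<^sup>2 = Re (cinner x (x::'a::complex_inner))"
  by (simp add: cinner_self)

lemma parallelogram: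
  fixes a b :: "'a::complex_inner"
  shows "(norm (a + b))\<^sup>2 + (norm (a - b))\<^sup>2 = 2 * (norm a)\<^sup>2 + 2 * (norm b)\<^sup>2"
proof -
  have "cinner (a + b) (a + b) + cinner (a - b) (a - b) = 2 * cinner a a + 2 * cinner b b"
    by (simp add: cinner_add_left cinner_add_right cinner_diff_left cinner_diff_right algebra_simps)
  then have "Re (cinner (a + b) (a + b) + cinner (a - b) (a - b)) = Re (2 * cinner a a + 2 * cinner b b)"
    by simp
  then show ?thesis by (simp add: norm_sq_Re)
qed

section \<open>Projection theorem\<close>

lemma projection_exists:
  fixes M :: "'a::chilbert set" and x :: 'a
  assumes sub: "csubspace M" and cl: "closed M"
  shows "\<exists>p\<in>M. \<forall>m\<in>M. cinner (x - p) m = 0"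
proof -
  define Ds where "Ds = (\<lambda>m. (norm (x - m))\<^sup>2) ` M"
  define d where "d = Inf Ds"
  have ne: "Ds \<noteq> {}" using csub_0[OF sub] by (auto simp: Ds_def)
  have bdd: "bdd_below Ds" unfolding Ds_def by (rule bdd_belowI[of _ 0]) auto
  have dle: "d \<le> (norm (x - m))\<^sup>2" if "m \<in> M" for m
    unfolding d_def using that bdd by (auto simp: Ds_def intro!: cInf_lower)
  have "\<exists>m\<in>M. (norm (x - m))\<^sup>2 < d + inverse (real (Suc n))" for n
  proof -
    have "Inf Ds < d + inverse (real (Suc n))" unfolding d_def by simp
    then obtain y where "y \<in> Ds" "y < d + inverse (real (Suc n))" using cInf_lessD[OF ne] by blast
    then show ?thesis by (auto simp: Ds_def)
  qed
  then obtain s where sM: "\<And>n. s n \<in> M" and sd: "\<And>n. (norm (x - s n))\<^sup>2 < d + inverse (real (Suc n))"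
    by metis
  have key: "(norm (s i - s j))\<^sup>2 \<le> 2 * inverse (real (Suc i)) + 2 * inverse (real (Suc j))" for i j
  proof -
    define a where "a = x - s i"
    define b where "b = x - s j"
    have mid: "scaleR (1/2) (s i + s j) \<in> M" using sM sub by (simp add: csub_add csub_scaleR)
    have h: "scaleR (1/2) (x + x) = x" unfolding scaleR_2[symmetric] by simp
    have "a + b = (x + x) - (s i + s j)" by (simp add: a_def b_def algebra_simps)
    then have "scaleR (1/2) (a + b) = scaleR (1/2) (x + x) - scaleR (1/2) (s i + s j)"
      by (simp only: scaleR_right_diff_distrib)
    then have "x - scaleR (1/2) (s i + s j) = scaleR (1/2) (a + b)" unfolding h by simp
    then have "(norm (a + b))\<^sup>2 = 4 * (norm (x - scaleR (1/2) (s i + s j)))\<^sup>2"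
      by (simp add: power_mult_distrib power2_eq_square)
    then have "4 * d \<le> (norm (a + b))\<^sup>2" using dle[OF mid] by simp
    moreover have "a - b = s j - s i" by (simp add: a_def b_def)
    then have "(norm (a - b))\<^sup>2 = (norm (s i - s j))\<^sup>2" by (simp add: norm_minus_commute)
    ultimately show ?thesis using parallelogram[of a b] sd[of i] sd[of j]
      unfolding a_def[symmetric] b_def[symmetric] by linarith
  qed
  have "Cauchy s"
  proof (rule metric_CauchyI)
    fix e :: real assume e: "e > 0"
    obtain N where N: "inverse (real (Suc N)) < e\<^sup>2 / 4"
      using reals_Archimedean[of "e\<^sup>2 / 4"] e by auto
    show "\<exists>M. \<forall>m\<ge>M. \<forall>n\<ge>M. dist (s m) (s n) < e"
    proof (intro exI allI impI)
      fix i j assume ij: "N \<le> i" "N \<le> j"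
      have "inverse (real (Suc i)) \<le> inverse (real (Suc N))" "inverse (real (Suc j)) \<le> inverse (real (Suc N))"
        using ij by (auto intro!: le_imp_inverse_le)
      then have "(norm (s i - s j))\<^sup>2 < e\<^sup>2" using key[of i j] N by linarith
      then have "norm (s i - s j) < e" using e by (simp add: power_less_imp_less_base)
      then show "dist (s i) (s j) < e" by (simp add: dist_norm)
    qed
  qed
  then obtain p where lim: "s \<longlonglongrightarrow> p" using Cauchy_convergent_iff convergent_def by blast
  have pM: "p \<in> M" using closed_sequentially[OF cl sM lim] .
  have lim2: "(\<lambda>n. (norm (x - s n))\<^sup>2) \<longlonglongrightarrow> (norm (x - p))\<^sup>2"
    by (intro tendsto_intros lim)
  have lim3: "(\<lambda>n. d + inverse (real (Suc n))) \<longlonglongrightarrow> d"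
    using tendsto_add[OF tendsto_const LIMSEQ_inverse_real_of_nat, of d] by simp
  have pmin: "(norm (x - p))\<^sup>2 \<le> d"
    using lim2 lim3 sd by (intro LIMSEQ_le[of _ _ _ d]) (auto intro: less_imp_le)
  show ?thesis
  proof (intro bexI[OF _ pM] ballI)
    fix m assume mM: "m \<in> M"
    show "cinner (x - p) m = 0"
    proof (cases "m = 0")
      case True then show ?thesis by simp
    next
      case False
      define t where "t = cinner (x - p) m / complex_of_real ((norm m)\<^sup>2)"
      have "p + scaleC t m \<in> M" using pM mM sub by (simp add: csub_add csub_scaleC)
      then have "(norm (x - p))\<^sup>2 \<le> (norm (x - p - scaleC t m))\<^sup>2"
        using dle pmin by (metis diff_diff_eq order_trans)
      also have "\<dots> = (norm (x - p))\<^sup>2 - (cmod (cinner (x - p) m))\<^sup>2 / (norm m)\<^sup>2"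
        unfolding t_def by (rule cs_identity[OF False])
      finally have "(cmod (cinner (x - p) m))\<^sup>2 / (norm m)\<^sup>2 \<le> 0" by simp
      then have "(cmod (cinner (x - p) m))\<^sup>2 \<le> 0" using False by (simp add: divide_le_0_iff)
      then show ?thesis by simp
    qed
  qed
qed

lemmas continuous_on_cinner = bounded_bilinear.continuous_on[OF bounded_bilinear_cinner]

lemma orth_dense_zero:
  fixes w :: "'a::complex_inner"
  assumes dense: "densely_defined S" and o: "\<forall>x\<in>S. cinner x w = 0"
  shows "w = 0"
proof -
  have cl: "closed {x. cinner x w = 0}"
    by (rule closed_Collect_eq) (intro continuous_on_cinner continuous_on_id continuous_on_const)+
  have "S \<subseteq> {x. cinner x w = 0}" using o by auto
  then have "closure S \<subseteq> {x. cinner x w = 0}" using cl by (rule closure_minimal)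
  then have "cinner w w = 0" using dense by (auto simp: densely_defined_def)
  then show ?thesis using cinner_eq_zero_iff by blast
qed

lemma adj_unique:
  fixes z1 z2 :: "'a::complex_inner"
  assumes dense: "densely_defined S" and "\<forall>x\<in>S. cinner x z1 = cinner x z2"
  shows "z1 = z2"
proof -
  have "\<forall>x\<in>S. cinner x (z1 - z2) = 0" using assms(2) by (simp add: cinner_diff_right)
  then have "z1 - z2 = 0" by (rule orth_dense_zero[OF dense])
  then show ?thesis by simp
qed

lemma adj_op_prop:
  fixes f :: "'a::complex_inner \<Rightarrow> 'b::complex_inner"
  assumes dense: "densely_defined S" and y: "y \<in> adj_dom S f"
  shows "\<forall>x\<in>S. cinner (f x) y = cinner x (adj_op S f y)"
proof -
  obtain z where z: "\<forall>x\<in>S. cinner (f x) y = cinner x z" using y by (auto simp: adj_dom_def)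
  have "\<exists>!z. \<forall>x\<in>S. cinner (f x) y = cinner x z"
    using z adj_unique[OF dense] by (metis (no_types, lifting))
  then show ?thesis unfolding adj_op_def by (rule theI')
qed

lemma adj_op_eq:
  fixes f :: "'a::complex_inner \<Rightarrow> 'b::complex_inner"
  assumes dense: "densely_defined S" and z: "\<forall>x\<in>S. cinner (f x) y = cinner x z"
  shows "y \<in> adj_dom S f" "adj_op S f y = z"
proof -
  show y: "y \<in> adj_dom S f" using z by (auto simp: adj_dom_def)
  have "\<forall>x\<in>S. cinner x (adj_op S f y) = cinner x z" using adj_op_prop[OF dense y] z by simp
  then show "adj_op S f y = z" using adj_unique[OF dense] by blast
qed

lemma adj_lin:
  fixes f :: "'a::complex_inner \<Rightarrow> 'b::complex_inner"
  assumes dense: "densely_defined S"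
  shows "lin_op (adj_dom S f) (adj_op S f)"
proof -
  let ?A = "adj_dom S f" and ?a = "adj_op S f"
  have add: "y1 + y2 \<in> ?A \<and> ?a (y1 + y2) = ?a y1 + ?a y2" if "y1 \<in> ?A" "y2 \<in> ?A" for y1 y2
  proof -
    have "\<forall>x\<in>S. cinner (f x) (y1 + y2) = cinner x (?a y1 + ?a y2)"
      using adj_op_prop[OF dense that(1)] adj_op_prop[OF dense that(2)]
      by (simp add: cinner_add_right)
    then show ?thesis using adj_op_eq[OF dense] by blast
  qed
  have sc: "scaleC c y \<in> ?A \<and> ?a (scaleC c y) = scaleC c (?a y)" if "y \<in> ?A" for y c
  proof -
    have "\<forall>x\<in>S. cinner (f x) (scaleC c y) = cinner x (scaleC c (?a y))"
      using adj_op_prop[OF dense that] by (simp add: cinner_scaleC_right)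
    then show ?thesis using adj_op_eq[OF dense] by blast
  qed
  have z: "0 \<in> ?A" using adj_op_eq(1)[OF dense, of f 0 0] by simp
  show ?thesis unfolding lin_op_def csubspace_def using add sc z by blast
qed

lemma adj_graph:
  fixes f :: "'a::complex_inner \<Rightarrow> 'b::complex_inner"
  assumes dense: "densely_defined S"
  shows "op_graph (adj_dom S f) (adj_op S f) = (\<Inter>x\<in>S. {p. cinner (f x) (fst p) = cinner x (snd p)})"
proof (intro equalityI subsetI)
  fix p assume "p \<in> op_graph (adj_dom S f) (adj_op S f)"
  then obtain y where y: "y \<in> adj_dom S f" "p = (y, adj_op S f y)" by (auto simp: op_graph_def)
  show "p \<in> (\<Inter>x\<in>S. {p. cinner (f x) (fst p) = cinner x (snd p)})"
    using adj_op_prop[OF dense y(1)] y(2) by auto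
next
  fix p assume "p \<in> (\<Inter>x\<in>S. {p. cinner (f x) (fst p) = cinner x (snd p)})"
  then have "\<forall>x\<in>S. cinner (f x) (fst p) = cinner x (snd p)" by auto
  from adj_op_eq[OF dense this] show "p \<in> op_graph (adj_dom S f) (adj_op S f)"
    by (auto simp: op_graph_def image_iff intro!: bexI[of _ "fst p"] prod_eqI)
qed

lemma adj_closed:
  fixes f :: "'a::complex_inner \<Rightarrow> 'b::complex_inner"
  assumes dense: "densely_defined S"
  shows "closed (op_graph (adj_dom S f) (adj_op S f))"
  unfolding adj_graph[OF dense]
  by (intro closed_INT ballI closed_Collect_eq continuous_on_cinner continuous_on_const continuous_on_fst continuous_on_snd continuous_on_id)

lemma lin_op_graph:
  assumes L: "lin_op S f"
  shows "csubspace (op_graph S f)"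
proof -
  have S: "csubspace S" and fa: "\<forall>x\<in>S. \<forall>y\<in>S. f (x + y) = f x + f y"
    and fs: "\<forall>c. \<forall>x\<in>S. f (scaleC c x) = scaleC c (f x)" using L by (auto simp: lin_op_def)
  have f0: "f 0 = 0" using fs csub_0[OF S] scaleC_zero_left by metis
  show ?thesis unfolding csubspace_def op_graph_def
  proof (intro conjI ballI allI)
    show "0 \<in> (\<lambda>x. (x, f x)) ` S" using csub_0[OF S] f0 by (auto simp: image_iff zero_prod_def intro!: bexI[of _ 0])
  next
    fix p q assume "p \<in> (\<lambda>x. (x, f x)) ` S" "q \<in> (\<lambda>x. (x, f x)) ` S"
    then obtain x y where "x \<in> S" "y \<in> S" "p = (x, f x)" "q = (y, f y)" by auto
    then show "p + q \<in> (\<lambda>x. (x, f x)) ` S" using fa csub_add[OF S]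
      by (auto simp: image_iff intro!: bexI[of _ "x + y"])
  next
    fix c p assume "p \<in> (\<lambda>x. (x, f x)) ` S"
    then obtain x where "x \<in> S" "p = (x, f x)" by auto
    then show "scaleC c p \<in> (\<lambda>x. (x, f x)) ` S" using fs csub_scaleC[OF S]
      by (auto simp: image_iff intro!: bexI[of _ "scaleC c x"])
  qed
qed

lemma lin_opD:
  assumes "lin_op S f"
  shows "csubspace S" "x \<in> S \<Longrightarrow> y \<in> S \<Longrightarrow> f (x + y) = f x + f y"
    "x \<in> S \<Longrightarrow> f (scaleC c x) = scaleC c (f x)"
  using assms by (auto simp: lin_op_def)

lemma lin_op_0: assumes L: "lin_op S f" shows "f 0 = 0"
proof -
  have "0 \<in> S" by (rule csub_0[OF lin_opD(1)[OF L]])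
  from lin_opD(3)[OF L this, of 0] show ?thesis by simp
qed

lemma lin_op_minus: "lin_op S f \<Longrightarrow> x \<in> S \<Longrightarrow> f (- x) = - f x"
  using lin_opD(3)[of S f x "-1"] by (simp add: scaleC_minus1)

lemma lin_op_diff: assumes L: "lin_op S f" and x: "x \<in> S" and y: "y \<in> S" shows "f (x - y) = f x - f y"
proof -
  have "- y \<in> S" by (rule csub_minus[OF lin_opD(1)[OF L] y])
  from lin_opD(2)[OF L x this] lin_op_minus[OF L y] show ?thesis by simp
qed

lemma biadj:
  fixes f :: "'a::chilbert \<Rightarrow> 'b::chilbert"
  assumes L: "lin_op S f" and dense: "densely_defined S" and cl: "closed_op S f"
    and h: "\<forall>x\<in>adj_dom S f. cinner (adj_op S f x) y = cinner x z"
  shows "y \<in> S \<and> f y = z"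
proof -
  obtain p where pM: "p \<in> op_graph S f" and orth: "\<forall>m\<in>op_graph S f. cinner ((y, z) - p) m = 0"
    using projection_exists[OF lin_op_graph[OF L], of "(y, z)"] cl unfolding closed_op_def by blast
  define r1 where "r1 = fst ((y, z) - p)"
  define r2 where "r2 = snd ((y, z) - p)"
  have r: "(y, z) - p = (r1, r2)" unfolding r1_def r2_def by (rule prod.collapse[symmetric])
  have "\<forall>u\<in>S. cinner (f u) r2 = cinner u (- r1)"
  proof
    fix u assume u: "u \<in> S"
    have "cinner ((y, z) - p) (u, f u) = 0" using orth u by (auto simp: op_graph_def)
    then have "cinner r1 u + cinner r2 (f u) = 0" unfolding r by simp
    then have "cinner r2 (f u) = - cinner r1 u" by (simp add: eq_neg_iff_add_eq_0 add.commute)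
    then have "cnj (cinner r2 (f u)) = - cnj (cinner r1 u)" by simp
    then show "cinner (f u) r2 = cinner u (- r1)"
      by (simp add: cinner_minus_right cinner_commute[of "f u"] cinner_commute[of u])
  qed
  from adj_op_eq[OF dense this] have r2A: "r2 \<in> adj_dom S f" and r2a: "adj_op S f r2 = - r1" by auto
  have "cinner (- r1) y = cinner r2 z" using h r2A r2a by auto
  then have e1: "cinner r1 y + cinner r2 z = 0" by (simp add: cinner_minus_left flip: neg_eq_iff_add_eq_0)
  have "cinner ((y, z) - p) p = 0" using orth pM by blast
  then have "cinner ((y, z) - p) ((y, z) - p) = cinner ((y, z) - p) (y, z)"
    by (simp add: cinner_diff_right)
  also have "\<dots> = 0" unfolding r using e1 by simp
  finally have "(y, z) - p = 0" using cinner_eq_zero_iff by blast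
  then have "(y, z) = p" by simp
  then show ?thesis using pM by (auto simp: op_graph_def)
qed

lemma ginner_pair: "ginner f x y = cinner (x, f x) (y, f y)"
  by (simp add: ginner_def)

lemma ginner_commute: "ginner f x y = cnj (ginner f y x)"
  unfolding ginner_pair by (rule cinner_commute)

lemma ginner_self_0: "ginner f x x = 0 \<Longrightarrow> x = 0"
  unfolding ginner_pair using cinner_eq_zero_iff by (metis prod.inject zero_prod_def)

lemma ginner_diff_left:
  "lin_op S f \<Longrightarrow> x \<in> S \<Longrightarrow> y \<in> S \<Longrightarrow> ginner f (x - y) v = ginner f x v - ginner f y v"
  by (simp add: ginner_def lin_op_diff cinner_diff_left)

lemma ginner_add_left:
  "lin_op S f \<Longrightarrow> x \<in> S \<Longrightarrow> y \<in> S \<Longrightarrow> ginner f (x + y) v = ginner f x v + ginner f y v"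
  by (simp add: ginner_def lin_opD(2) cinner_add_left)

lemma ginner_scaleC_left:
  "lin_op S f \<Longrightarrow> x \<in> S \<Longrightarrow> ginner f (scaleC c x) v = c * ginner f x v"
  by (simp add: ginner_def lin_opD(3) cinner_scaleC_left algebra_simps)

lemma bd_csub:
  assumes L: "lin_op S f"
  shows "csubspace (bd S f R)"
proof -
  have S: "csubspace S" using lin_opD(1)[OF L] .
  show ?thesis unfolding csubspace_def
  proof (intro conjI ballI allI)
    show "0 \<in> bd S f R" using csub_0[OF S] lin_op_0[OF L] by (simp add: bd_def ginner_def)
  next
    fix x y assume x: "x \<in> bd S f R" and y: "y \<in> bd S f R"
    then have xS: "x \<in> S" and yS: "y \<in> S" by (auto simp: bd_def)
    show "x + y \<in> bd S f R" unfolding bd_def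
      using x y csub_add[OF S xS yS] ginner_add_left[OF L xS yS] by (auto simp: bd_def)
  next
    fix c x assume x: "x \<in> bd S f R"
    then have xS: "x \<in> S" by (auto simp: bd_def)
    show "scaleC c x \<in> bd S f R" unfolding bd_def
      using x csub_scaleC[OF S xS] ginner_scaleC_left[OF L xS] by (auto simp: bd_def)
  qed
qed

lemma bd_proj_unique:
  assumes L: "lin_op S f" and RS: "R \<subseteq> S" and u: "u \<in> S"
    and w: "w \<in> bd S f R" and uw: "u - w \<in> R"
  shows "bd_proj (bd S f R) f u = w"
  unfolding bd_proj_def
proof (rule the_equality)
  have "ginner f (u - w) v = 0" if "v \<in> bd S f R" for v
  proof -
    have "ginner f v (u - w) = 0" using that uw by (auto simp: bd_def)
    then show ?thesis by (subst ginner_commute) simp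
  qed
  then show "w \<in> bd S f R \<and> (\<forall>v\<in>bd S f R. ginner f (u - w) v = 0)" using w by blast
next
  fix w' assume w': "w' \<in> bd S f R \<and> (\<forall>v\<in>bd S f R. ginner f (u - w') v = 0)"
  have B: "csubspace (bd S f R)" by (rule bd_csub[OF L])
  have wS: "w \<in> S" and w'S: "w' \<in> S" using w w' by (auto simp: bd_def)
  define d where "d = w - w'"
  have dB: "d \<in> bd S f R" unfolding d_def using w w' csub_diff[OF B] by blast
  have "ginner f (u - w) d = 0" using uw dB by (subst ginner_commute) (auto simp: bd_def)
  moreover have "ginner f (u - w') d = 0" using w' dB by blast
  moreover have "d = (u - w') - (u - w)" by (simp add: d_def)
  moreover have "u - w' \<in> S" "u - w \<in> S" using u wS w'S csub_diff[OF lin_opD(1)[OF L]] by auto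
  ultimately have "ginner f d d = 0" using ginner_diff_left[OF L] by (metis diff_zero)
  then have "d = 0" by (rule ginner_self_0)
  then show "w' = w" by (simp add: d_def)
qed

lemma bd_proj_exists:
  fixes f :: "'a::chilbert \<Rightarrow> 'b::chilbert"
  assumes L: "lin_op S f" and RS: "R \<subseteq> S" and R: "csubspace R"
    and cl: "closed (op_graph R f)" and u: "u \<in> S"
  shows "\<exists>w. w \<in> bd S f R \<and> u - w \<in> R"
proof -
  have LR: "lin_op R f" unfolding lin_op_def using R lin_opD(2,3)[OF L] RS by blast
  obtain p where pM: "p \<in> op_graph R f" and orth: "\<forall>m\<in>op_graph R f. cinner ((u, f u) - p) m = 0"
    using projection_exists[OF lin_op_graph[OF LR] cl, of "(u, f u)"] by blast
  obtain v where v: "v \<in> R" "p = (v, f v)" using pM by (auto simp: op_graph_def)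
  have vS: "v \<in> S" using v RS by auto
  define w where "w = u - v"
  have wS: "w \<in> S" unfolding w_def using u vS csub_diff[OF lin_opD(1)[OF L]] by blast
  have eq: "(u, f u) - p = (w, f w)" unfolding w_def v using lin_op_diff[OF L u vS] by simp
  have "w \<in> bd S f R" unfolding bd_def
  proof (intro CollectI conjI wS ballI)
    fix m assume "m \<in> R"
    then have "cinner ((u, f u) - p) (m, f m) = 0" using orth by (auto simp: op_graph_def)
    then show "ginner f w m = 0" unfolding eq ginner_pair .
  qed
  moreover have "u - w = v" by (simp add: w_def)
  ultimately show ?thesis using v by auto
qed

lemma bd_proj_props:
  fixes f :: "'a::chilbert \<Rightarrow> 'b::chilbert"
  assumes L: "lin_op S f" and RS: "R \<subseteq> S" and R: "csubspace R"
    and cl: "closed (op_graph R f)" and u: "u \<in> S"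
  shows "bd_proj (bd S f R) f u \<in> bd S f R" "u - bd_proj (bd S f R) f u \<in> R"
proof -
  obtain w where w: "w \<in> bd S f R" "u - w \<in> R" using bd_proj_exists[OF assms] by blast
  then show "bd_proj (bd S f R) f u \<in> bd S f R" "u - bd_proj (bd S f R) f u \<in> R"
    using bd_proj_unique[OF L RS u w] by auto
qed

lemma clinearD:
  assumes "bounded_clinear a"
  shows "a (x + y) = a x + a y" "a (scaleC c x) = scaleC c (a x)"
  using assms by (auto simp: bounded_clinear_def clinear_def)

lemma clinear_diff: "bounded_clinear a \<Longrightarrow> a (x - y) = a x - a y"
  by (metis add_diff_cancel clinearD(1) diff_add_cancel)

lemma bounded_clinear_bl: assumes "bounded_clinear a" shows "bounded_linear a"
proof -
  obtain K where K: "\<forall>x. norm (a x) \<le> norm x * K" using assms by (auto simp: bounded_clinear_def)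
  show ?thesis
    by (rule bounded_linear_intro[where K=K]) (use assms K in \<open>auto simp: bounded_clinear_def clinear_def scaleR_scaleC\<close>)
qed

lemma badj_prop:
  fixes a :: "'a::chilbert \<Rightarrow> 'b::chilbert"
  assumes a: "bounded_clinear a"
  shows "cinner (a x) y = cinner x (badj a y)"
proof -
  define \<phi> where "\<phi> = (\<lambda>x. cinner (a x) y)"
  have \<phi>add: "\<phi> (x1 + x2) = \<phi> x1 + \<phi> x2" for x1 x2
    by (simp add: \<phi>_def clinearD(1)[OF a] cinner_add_left)
  have \<phi>sc: "\<phi> (scaleC c x1) = c * \<phi> x1" for c x1
    by (simp add: \<phi>_def clinearD(2)[OF a] cinner_scaleC_left)
  have \<phi>diff: "\<phi> (x1 - x2) = \<phi> x1 - \<phi> x2" for x1 x2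
    by (simp add: \<phi>_def clinear_diff[OF a] cinner_diff_left)
  have ex: "\<exists>z. \<forall>x. \<phi> x = cinner x z"
  proof (cases "\<forall>x. \<phi> x = 0")
    case True then show ?thesis by (intro exI[of _ 0]) simp
  next
    case False
    then obtain x0 where x0: "\<phi> x0 \<noteq> 0" by blast
    define N where "N = {x. \<phi> x = 0}"
    have \<phi>0: "\<phi> 0 = 0" using \<phi>sc[of 0 0] by simp
    have Nsub: "csubspace N" unfolding N_def csubspace_def
      using \<phi>add \<phi>sc \<phi>0 by auto
    have cont: "continuous_on UNIV a" by (rule linear_continuous_on[OF bounded_clinear_bl[OF a]])
    have Ncl: "closed N" unfolding N_def \<phi>_def
      by (rule closed_Collect_eq) (intro continuous_on_cinner cont continuous_on_const)+
    obtain p where pN: "p \<in> N" and orth: "\<forall>m\<in>N. cinner (x0 - p) m = 0"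
      using projection_exists[OF Nsub Ncl] by blast
    define w where "w = x0 - p"
    have \<phi>w: "\<phi> w = \<phi> x0" using pN by (simp add: w_def \<phi>diff N_def)
    then have wnz: "w \<noteq> 0" using x0 \<phi>0 by auto
    define z where "z = scaleC (cnj (\<phi> w) / complex_of_real ((norm w)\<^sup>2)) w"
    have "\<phi> x = cinner x z" for x
    proof -
      define m where "m = x - scaleC (\<phi> x / \<phi> w) w"
      have "\<phi> m = \<phi> x - (\<phi> x / \<phi> w) * \<phi> w" by (simp add: m_def \<phi>diff \<phi>sc)
      also have "\<dots> = 0" using \<phi>w x0 by simp
      finally have "m \<in> N" by (simp add: N_def)
      then have "cinner w m = 0" using orth by (simp add: w_def)
      then have "cinner m w = 0" by (metis cinner_commute complex_cnj_zero)
      then have "cinner x w = (\<phi> x / \<phi> w) * cinner w w"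
        by (simp add: m_def cinner_diff_left cinner_scaleC_left)
      then have cxw: "cinner x w = (\<phi> x / \<phi> w) * complex_of_real ((norm w)\<^sup>2)"
        by (simp add: cinner_self)
      have nz: "complex_of_real ((norm w)\<^sup>2) \<noteq> 0" using wnz by simp
      have "cinner x z = (\<phi> w / complex_of_real ((norm w)\<^sup>2)) * cinner x w"
        by (simp add: z_def cinner_scaleC_right)
      also have "\<dots> = \<phi> x" unfolding cxw using nz \<phi>w x0 by (simp add: field_simps)
      finally show ?thesis by simp
    qed
    then show ?thesis by blast
  qed
  have "\<exists>!z. \<forall>x. cinner (a x) y = cinner x z"
  proof -
    obtain z where z: "\<forall>x. \<phi> x = cinner x z" using ex by blast
    have "z' = z" if "\<forall>x. cinner (a x) y = cinner x z'" for z'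
    proof -
      have "\<forall>x. cinner x (z' - z) = 0"
      proof
        fix x
        have "cinner x (z' - z) = cinner x z' - cinner x z" by (rule cinner_diff_right)
        also have "\<dots> = cinner (a x) y - \<phi> x" using that z by metis
        finally show "cinner x (z' - z) = 0" by (simp add: \<phi>_def)
      qed
      then have "cinner (z' - z) (z' - z) = 0" by (rule spec)
      then have "z' - z = 0" by (simp only: cinner_eq_zero_iff)
      then show ?thesis by simp
    qed
    then show ?thesis using z unfolding \<phi>_def by blast
  qed
  then have "\<forall>x. cinner (a x) y = cinner x (badj a y)" unfolding badj_def by (rule theI')
  then show ?thesis by blast
qed

lemma adj_neg_closed:
  fixes f :: "'a::complex_inner \<Rightarrow> 'b::complex_inner"
  assumes dense: "densely_defined S"
  shows "closed (op_graph (adj_dom S f) (\<lambda>y. - adj_op S f y))"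
proof -
  have "op_graph (adj_dom S f) (\<lambda>y. - adj_op S f y)
      = (\<lambda>p. (fst p, - snd p)) -` op_graph (adj_dom S f) (adj_op S f)"
    by (auto simp: op_graph_def image_iff) (metis minus_minus prod.collapse)
  moreover have "closed ((\<lambda>p. (fst p, - snd p)) -` op_graph (adj_dom S f) (adj_op S f))"
    by (rule continuous_closed_vimage[OF adj_closed[OF dense]]) (intro continuous_intros)
  ultimately show ?thesis by simp
qed

theorem corollary5p4:
  fixes G :: "'a::chilbert \<Rightarrow> 'b::chilbert" and domG :: "'a set"
    and D :: "'b \<Rightarrow> 'a" and domD :: "'b set"
    and m :: "'a \<Rightarrow> 'a" and a :: "'b \<Rightarrow> 'b" and T :: "'a \<Rightarrow> 'a"
  assumes G_op: "lin_op domG G" "densely_defined domG" "closed_op domG G"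
    and D_op: "lin_op domD D" "densely_defined domD" "closed_op domD D"
    and GD: "\<forall>y\<in>adj_dom domG G. y \<in> domD \<and> D y = - adj_op domG G y"
    and m: "bounded_clinear m"
    and a: "bounded_clinear a" "coercive a"
    and T_maps: "\<forall>u\<in>adj_dom domD D. T u \<in> adj_dom domD D"
    and T_def: "\<forall>u\<in>adj_dom domD D. \<forall>v\<in>adj_dom domD D.
                  ginner (\<lambda>x. - adj_op domD D x) (T u) v
                    = cinner (a (G u)) (G v) + cinner (m u) v"
    and T_ran_closed: "closed (op_graph (T ` adj_dom domD D) (\<lambda>x. - adj_op domD D x))"
  shows "fst ` {(bd_proj (bd domG G (adj_dom domD D)) G u,
                 bd_proj (bd domD D (adj_dom domG G)) D (a (G u))) | u.
               u \<in> domG \<and> a (G u) \<in> domD \<and> m u - D (a (G u)) = 0}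
       = {u0 \<in> bd domG G (adj_dom domD D).
            \<forall>v\<in>{v \<in> adj_dom domD D. badj a (- adj_op domD D v) \<in> domD
                    \<and> badj m v = D (badj a (- adj_op domD D v))}.
              cinner (D (bd_proj (bd domD D (adj_dom domG G)) D (badj a (G v)))) u0
              + cinner (bd_proj (bd domD D (adj_dom domG G)) D (badj a (G v))) (G u0) = 0}"
proof -
  let ?S0 = "adj_dom domD D" and ?S1 = "adj_dom domG G"
  let ?BG = "bd domG G ?S0" and ?BD = "bd domD D ?S1"
  let ?aD = "adj_op domD D" and ?aG = "adj_op domG G"
  define Phi where "Phi = (\<lambda>q u. cinner (D q) u + cinner q (G u))"
  have LG: "lin_op domG G" and LD: "lin_op domD D" using G_op D_op by auto
  have dG: "densely_defined domG" and dD: "densely_defined domD" using G_op D_op by auto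
  have propD: "\<And>y x. y \<in> ?S0 \<Longrightarrow> x \<in> domD \<Longrightarrow> cinner (D x) y = cinner x (?aD y)"
    using adj_op_prop[OF dD] by blast
  have propG: "\<And>y x. y \<in> ?S1 \<Longrightarrow> x \<in> domG \<Longrightarrow> cinner (G x) y = cinner x (?aG y)"
    using adj_op_prop[OF dG] by blast
  have S0G: "y \<in> domG \<and> G y = - ?aD y" if y: "y \<in> ?S0" for y
  proof (rule biadj[OF LG dG G_op(3)], intro ballI)
    fix x assume x: "x \<in> ?S1"
    have xD: "x \<in> domD" and Dx: "D x = - ?aG x" using GD x by auto
    have "cinner (?aG x) y = - cinner (D x) y" using Dx by (simp add: cinner_minus_left)
    also have "\<dots> = - cinner x (?aD y)" using propD[OF y xD] by simp
    finally show "cinner (?aG x) y = cinner x (- ?aD y)" by (simp add: cinner_minus_right)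
  qed
  have S0sub: "?S0 \<subseteq> domG" using S0G by blast
  have S1sub: "?S1 \<subseteq> domD" using GD by blast
  have Gv: "\<And>y. y \<in> ?S0 \<Longrightarrow> G y = - ?aD y" using S0G by blast
  have DS1: "\<And>y. y \<in> ?S1 \<Longrightarrow> D y = - ?aG y" using GD by blast
  have S0c: "csubspace ?S0" using adj_lin[OF dD] lin_opD(1) by blast
  have S1c: "csubspace ?S1" using adj_lin[OF dG] lin_opD(1) by blast
  have gr0: "op_graph ?S0 G = op_graph ?S0 (\<lambda>y. - ?aD y)"
    using Gv by (auto simp: op_graph_def image_iff)
  have gr1: "op_graph ?S1 D = op_graph ?S1 (\<lambda>y. - ?aG y)"
    using DS1 by (auto simp: op_graph_def image_iff)
  have cl0: "closed (op_graph ?S0 G)" unfolding gr0 by (rule adj_neg_closed[OF dD])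
  have cl1: "closed (op_graph ?S1 D)" unfolding gr1 by (rule adj_neg_closed[OF dG])
  note propBG = bd_proj_props[OF LG S0sub S0c cl0]
  note propBD = bd_proj_props[OF LD S1sub S1c cl1]
  have K1: "Phi q y = 0" if q: "q \<in> domD" and y: "y \<in> ?S0" for q y
    using propD[OF y q] Gv[OF y] by (simp add: Phi_def cinner_minus_right)
  have K2: "Phi r y = 0" if r: "r \<in> ?S1" and y: "y \<in> domG" for r y
  proof -
    have "cinner r (G y) = cnj (cinner (G y) r)" by (rule cinner_commute)
    also have "\<dots> = cnj (cinner y (?aG r))" using propG[OF r y] by simp
    also have "\<dots> = cinner (?aG r) y" by (simp add: cinner_commute[of y])
    finally show ?thesis using DS1[OF r] by (simp add: Phi_def cinner_minus_left)
  qed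
  have Phi_diff1: "Phi (q - s) y = Phi q y - Phi s y" if "q \<in> domD" "s \<in> domD" for q s y
    using lin_op_diff[OF LD that] by (simp add: Phi_def cinner_diff_left)
  have Phi_diff2: "Phi q (u - w) = Phi q u - Phi q w" if "u \<in> domG" "w \<in> domG" for q u w
    using lin_op_diff[OF LG that] by (simp add: Phi_def cinner_diff_right)
  have Phi_proj: "Phi (bd_proj ?BD D q) u0 = Phi q u0" if q: "q \<in> domD" and u0: "u0 \<in> domG" for q u0
  proof -
    have pB: "bd_proj ?BD D q \<in> domD" using propBD(1)[OF q] by (auto simp: bd_def)
    have s: "q - bd_proj ?BD D q \<in> ?S1" by (rule propBD(2)[OF q])
    have "bd_proj ?BD D q = q - (q - bd_proj ?BD D q)" by simp
    then have "Phi (bd_proj ?BD D q) u0 = Phi q u0 - Phi (q - bd_proj ?BD D q) u0"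
      using Phi_diff1[OF q, of "q - bd_proj ?BD D q" u0] S1sub s by (metis subsetD)
    then show ?thesis using K2[OF s u0] by simp
  qed
  have ma: "\<And>x y. cinner (m x) y = cinner x (badj m y)" using badj_prop[OF m] by blast
  have aa: "\<And>x y. cinner (a x) y = cinner x (badj a y)" using badj_prop[OF a(1)] by blast
  have Phi_val: "Phi q u = cnj (cinner (m u) v + cinner (a (G u)) (G v))"
    if "q = badj a (G v)" "D q = badj m v" for q u v
  proof -
    have "cinner (D q) u = cnj (cinner (m u) v)"
      unfolding that(2) by (simp add: ma cinner_commute[of u])
    moreover have "cinner q (G u) = cnj (cinner (a (G u)) (G v))"
      unfolding that(1) by (simp add: aa cinner_commute[of "G u"])
    ultimately show ?thesis by (simp add: Phi_def)
  qed
  show ?thesis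
  proof (intro equalityI subsetI)
    fix u0 assume "u0 \<in> fst ` {(bd_proj ?BG G u, bd_proj ?BD D (a (G u))) | u.
               u \<in> domG \<and> a (G u) \<in> domD \<and> m u - D (a (G u)) = 0}"
    then obtain u where u: "u \<in> domG" "a (G u) \<in> domD" "m u - D (a (G u)) = 0"
      and u0: "u0 = bd_proj ?BG G u" by auto
    have u0B: "u0 \<in> ?BG" unfolding u0 by (rule propBG(1)[OF u(1)])
    have w: "u - u0 \<in> ?S0" unfolding u0 by (rule propBG(2)[OF u(1)])
    have u0G: "u0 \<in> domG" using u0B by (auto simp: bd_def)
    have mu: "m u = D (a (G u))" using u(3) by simp
    show "u0 \<in> {u0 \<in> ?BG. \<forall>v\<in>{v \<in> ?S0. badj a (- ?aD v) \<in> domD \<and> badj m v = D (badj a (- ?aD v))}.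
              cinner (D (bd_proj ?BD D (badj a (G v)))) u0 + cinner (bd_proj ?BD D (badj a (G v))) (G u0) = 0}"
    proof (intro CollectI conjI u0B ballI)
      fix v assume "v \<in> {v \<in> ?S0. badj a (- ?aD v) \<in> domD \<and> badj m v = D (badj a (- ?aD v))}"
      then have v: "v \<in> ?S0" "badj a (G v) \<in> domD" "badj m v = D (badj a (G v))"
        using Gv by auto
      define q where "q = badj a (G v)"
      have qD: "q \<in> domD" using v by (simp add: q_def)
      have "Phi (bd_proj ?BD D q) u0 = Phi q u0" by (rule Phi_proj[OF qD u0G])
      also have "\<dots> = Phi q u" 
      proof -
        have "u0 = u - (u - u0)" by simp
        then have "Phi q u0 = Phi q u - Phi q (u - u0)"
          using Phi_diff2[OF u(1), of "u - u0" q] S0sub w by (metis subsetD)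
        then show ?thesis using K1[OF qD w] by simp
      qed
      also have "\<dots> = cnj (cinner (m u) v + cinner (a (G u)) (G v))"
        by (rule Phi_val) (use v in \<open>simp_all add: q_def\<close>)
      also have "cinner (m u) v = - cinner (a (G u)) (G v)"
        using propD[OF v(1) u(2)] Gv[OF v(1)] mu by (simp add: cinner_minus_right)
      finally show "cinner (D (bd_proj ?BD D (badj a (G v)))) u0 + cinner (bd_proj ?BD D (badj a (G v))) (G u0) = 0"
        by (simp add: Phi_def q_def)
    qed
  next
    fix u0 assume "u0 \<in> {u0 \<in> ?BG. \<forall>v\<in>{v \<in> ?S0. badj a (- ?aD v) \<in> domD \<and> badj m v = D (badj a (- ?aD v))}.
              cinner (D (bd_proj ?BD D (badj a (G v)))) u0 + cinner (bd_proj ?BD D (badj a (G v))) (G u0) = 0}"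
    then have u0B: "u0 \<in> ?BG" and hyp: "\<And>v. v \<in> ?S0 \<Longrightarrow> badj a (- ?aD v) \<in> domD \<Longrightarrow> badj m v = D (badj a (- ?aD v))
        \<Longrightarrow> Phi (bd_proj ?BD D (badj a (G v))) u0 = 0" by (auto simp: Phi_def)
    have u0G: "u0 \<in> domG" using u0B by (auto simp: bd_def)
    have LS0: "lin_op ?S0 G" unfolding lin_op_def using S0c lin_opD(2,3)[OF LG] S0sub by blast
    have a0: "\<And>y. a (- y) = - a y"
    proof -
      fix y
      have "a (scaleC (-1) y) = scaleC (-1) (a y)" by (rule clinearD(2)[OF a(1)])
      then show "a (- y) = - a y" by (simp add: scaleC_minus1)
    qed
    have gg: "ginner (\<lambda>x. - ?aD x) t v = ginner G t v" if "t \<in> ?S0" "v \<in> ?S0" for t v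
      using that Gv by (simp add: ginner_def)
    have TS0: "\<And>u. u \<in> ?S0 \<Longrightarrow> T u \<in> ?S0" using T_maps by blast
    have Tdef: "ginner G (T u) v = cinner (a (G u)) (G v) + cinner (m u) v"
      if "u \<in> ?S0" "v \<in> ?S0" for u v
      using T_def that gg[OF TS0[OF that(1)] that(2)] by metis
    have uniq: "x = y" if "x \<in> ?S0" "y \<in> ?S0" "\<forall>v\<in>?S0. ginner G x v = ginner G y v" for x y
    proof -
      have d: "x - y \<in> ?S0" using csub_diff[OF S0c that(1,2)] .
      have "ginner G (x - y) (x - y) = ginner G x (x - y) - ginner G y (x - y)"
        by (rule ginner_diff_left[OF LS0 that(1,2)])
      also have "\<dots> = 0" using that(3) d by simp
      finally have "x - y = 0" by (rule ginner_self_0)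
      then show ?thesis by simp
    qed
    have Tadd: "T (u + u') = T u + T u'" if "u \<in> ?S0" "u' \<in> ?S0" for u u'
    proof (rule uniq)
      show "T (u + u') \<in> ?S0" using TS0 csub_add[OF S0c that] by blast
      show "T u + T u' \<in> ?S0" using csub_add[OF S0c TS0[OF that(1)] TS0[OF that(2)]] .
      show "\<forall>v\<in>?S0. ginner G (T (u + u')) v = ginner G (T u + T u') v"
      proof
        fix v assume v: "v \<in> ?S0"
        have uG: "u \<in> domG" "u' \<in> domG" using that S0sub by auto
        have "ginner G (T (u + u')) v = cinner (a (G (u + u'))) (G v) + cinner (m (u + u')) v"
          by (rule Tdef[OF csub_add[OF S0c that] v])
        also have "\<dots> = (cinner (a (G u)) (G v) + cinner (m u) v) + (cinner (a (G u')) (G v) + cinner (m u') v)"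
          using lin_opD(2)[OF LG uG] by (simp add: clinearD(1)[OF a(1)] clinearD(1)[OF m] cinner_add_left)
        also have "\<dots> = ginner G (T u) v + ginner G (T u') v" using Tdef that v by simp
        also have "\<dots> = ginner G (T u + T u') v"
          by (rule ginner_add_left[OF LS0 TS0[OF that(1)] TS0[OF that(2)], symmetric])
        finally show "ginner G (T (u + u')) v = ginner G (T u + T u') v" .
      qed
    qed
    have Tsc: "T (scaleC c u) = scaleC c (T u)" if "u \<in> ?S0" for u c
    proof (rule uniq)
      show "T (scaleC c u) \<in> ?S0" using TS0 csub_scaleC[OF S0c that] by blast
      show "scaleC c (T u) \<in> ?S0" using csub_scaleC[OF S0c TS0[OF that]] .
      show "\<forall>v\<in>?S0. ginner G (T (scaleC c u)) v = ginner G (scaleC c (T u)) v"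
      proof
        fix v assume v: "v \<in> ?S0"
        have uG: "u \<in> domG" using that S0sub by auto
        have "ginner G (T (scaleC c u)) v = cinner (a (G (scaleC c u))) (G v) + cinner (m (scaleC c u)) v"
          by (rule Tdef[OF csub_scaleC[OF S0c that] v])
        also have "\<dots> = c * (cinner (a (G u)) (G v) + cinner (m u) v)"
          using lin_opD(3)[OF LG uG] by (simp add: clinearD(2)[OF a(1)] clinearD(2)[OF m] cinner_scaleC_left algebra_simps)
        also have "\<dots> = c * ginner G (T u) v" using Tdef that v by simp
        also have "\<dots> = ginner G (scaleC c (T u)) v"
          by (rule ginner_scaleC_left[OF LS0 TS0[OF that], symmetric])
        finally show "ginner G (T (scaleC c u)) v = ginner G (scaleC c (T u)) v" .
      qed
    qed
    have T0: "T 0 = 0" using Tsc[OF csub_0[OF S0c], of 0] by simp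
    have TSc: "csubspace (T ` ?S0)" unfolding csubspace_def
    proof (intro conjI ballI allI)
      show "0 \<in> T ` ?S0" using T0 csub_0[OF S0c] by (metis image_eqI)
    next
      fix x y assume "x \<in> T ` ?S0" "y \<in> T ` ?S0"
      then obtain u u' where "u \<in> ?S0" "u' \<in> ?S0" "x = T u" "y = T u'" by auto
      then show "x + y \<in> T ` ?S0" using Tadd csub_add[OF S0c] by (metis image_eqI)
    next
      fix c x assume "x \<in> T ` ?S0"
      then obtain u where "u \<in> ?S0" "x = T u" by auto
      then show "scaleC c x \<in> T ` ?S0" using Tsc csub_scaleC[OF S0c] by (metis image_eqI)
    qed
    have TimgS0: "T ` ?S0 \<subseteq> ?S0" using TS0 by blast
    have LT: "lin_op (T ` ?S0) G" unfolding lin_op_def using TSc lin_opD(2,3)[OF LG] TimgS0 S0sub by blast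
    have grT: "op_graph (T ` ?S0) G = op_graph (T ` ?S0) (\<lambda>x. - ?aD x)"
      unfolding op_graph_def
    proof (rule image_cong[OF refl])
      fix x assume "x \<in> T ` ?S0"
      then have "x \<in> ?S0" using TimgS0 by blast
      then show "(x, G x) = (x, - ?aD x)" using Gv by simp
    qed
    have clT: "closed (op_graph (T ` ?S0) G)" unfolding grT by (rule T_ran_closed)
    \<comment> \<open>Riesz representative of the functional l\<close>
    obtain p where pM: "p \<in> op_graph ?S0 G"
      and orth: "\<forall>mm\<in>op_graph ?S0 G. cinner ((m u0, a (G u0)) - p) mm = 0"
      using projection_exists[OF lin_op_graph[OF LS0] cl0, of "(m u0, a (G u0))"] by blast
    obtain f where f: "f \<in> ?S0" "p = (f, G f)" using pM by (auto simp: op_graph_def)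
    have lf: "cinner (a (G u0)) (G x) + cinner (m u0) x = ginner G f x" if x: "x \<in> ?S0" for x
    proof -
      have "cinner ((m u0, a (G u0)) - p) (x, G x) = 0" using orth x by (auto simp: op_graph_def)
      then have "cinner (m u0, a (G u0)) (x, G x) = cinner p (x, G x)" by (simp add: cinner_diff_left)
      then show ?thesis unfolding f(2) by (simp add: ginner_def add.commute)
    qed
    have mf: "- f \<in> ?S0" using csub_minus[OF S0c f(1)] .
    obtain p' where p'M: "p' \<in> op_graph (T ` ?S0) G"
      and orth': "\<forall>mm\<in>op_graph (T ` ?S0) G. cinner ((- f, G (- f)) - p') mm = 0"
      using projection_exists[OF lin_op_graph[OF LT] clT, of "(- f, G (- f))"] by blast
    obtain w0 where w0: "w0 \<in> ?S0" "p' = (T w0, G (T w0))" using p'M by (auto simp: op_graph_def)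
    define k where "k = - f - T w0"
    have kS0: "k \<in> ?S0" unfolding k_def using csub_diff[OF S0c mf TS0[OF w0(1)]] .
    have keq: "(- f, G (- f)) - p' = (k, G k)" unfolding w0(2) k_def
      using lin_op_diff[OF LS0 mf TS0[OF w0(1)]] by simp
    have kK: "ginner G (T w) k = 0" if w: "w \<in> ?S0" for w
    proof -
      have "cinner ((- f, G (- f)) - p') (T w, G (T w)) = 0" using orth' w by (auto simp: op_graph_def)
      then have "ginner G k (T w) = 0" unfolding keq ginner_pair .
      then show ?thesis by (subst ginner_commute) simp
    qed
    have kD: "badj a (G k) \<in> domD \<and> D (badj a (G k)) = badj m k"
    proof (rule biadj[OF LD dD D_op(3)], intro ballI)
      fix x assume x: "x \<in> ?S0"
      have "cinner (?aD x) (badj a (G k)) = - cinner (G x) (badj a (G k))"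
        using Gv[OF x] by (simp add: cinner_minus_left)
      also have "\<dots> = - cinner (a (G x)) (G k)" by (simp add: aa)
      also have "\<dots> = cinner (m x) k" using kK[OF x] Tdef[OF x kS0]
        by (subst neg_eq_iff_add_eq_0) (simp add: add.commute)
      also have "\<dots> = cinner x (badj m k)" by (rule ma)
      finally show "cinner (?aD x) (badj a (G k)) = cinner x (badj m k)" .
    qed
    have "Phi (bd_proj ?BD D (badj a (G k))) u0 = 0"
      using hyp[OF kS0] kD Gv[OF kS0] by simp
    then have "Phi (badj a (G k)) u0 = 0" using Phi_proj kD u0G by simp
    then have "cnj (cinner (m u0) k + cinner (a (G u0)) (G k)) = 0"
      using Phi_val[of "badj a (G k)" k u0] kD by simp
    then have "cinner (m u0) k + cinner (a (G u0)) (G k) = 0" by (simp only: complex_cnj_zero_iff)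
    then have fk: "ginner G f k = 0" using lf[OF kS0] by (simp add: add.commute)
    have "ginner G k k = ginner G (- f) k - ginner G (T w0) k"
      unfolding k_def by (rule ginner_diff_left[OF LS0 mf TS0[OF w0(1)]])
    also have "ginner G (- f) k = - ginner G f k"
      using lin_op_minus[OF LS0 f(1)] by (simp add: ginner_def cinner_minus_left)
    finally have "ginner G k k = 0" using fk kK[OF w0(1)] by simp
    then have "k = 0" by (rule ginner_self_0)
    then have Tw0: "T w0 = - f" by (simp add: k_def)
    define u where "u = u0 + w0"
    have w0G: "w0 \<in> domG" using w0 S0sub by auto
    have uG: "u \<in> domG" unfolding u_def using csub_add[OF lin_opD(1)[OF LG] u0G w0G] .
    have sum0: "cinner (a (G u)) (G x) + cinner (m u) x = 0" if x: "x \<in> ?S0" for x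
    proof -
      have "cinner (a (G u)) (G x) + cinner (m u) x
          = (cinner (a (G u0)) (G x) + cinner (m u0) x) + (cinner (a (G w0)) (G x) + cinner (m w0) x)"
        unfolding u_def using lin_opD(2)[OF LG u0G w0G]
        by (simp add: clinearD(1)[OF a(1)] clinearD(1)[OF m] cinner_add_left)
      also have "\<dots> = ginner G f x + ginner G (T w0) x" using lf[OF x] Tdef[OF w0(1) x] by simp
      also have "ginner G (T w0) x = - ginner G f x"
        unfolding Tw0 using lin_op_minus[OF LS0 f(1)] by (simp add: ginner_def cinner_minus_left)
      finally show ?thesis by simp
    qed
    have uD: "a (G u) \<in> domD \<and> D (a (G u)) = m u"
    proof (rule biadj[OF LD dD D_op(3)], intro ballI)
      fix x assume x: "x \<in> ?S0"
      have "cinner (?aD x) (a (G u)) = - cnj (cinner (a (G u)) (G x))"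
        using Gv[OF x] by (simp add: cinner_minus_right cinner_commute[of "a (G u)"])
      also have "\<dots> = cnj (cinner (m u) x)"
      proof -
        have "cinner (m u) x = - cinner (a (G u)) (G x)" using sum0[OF x]
          by (subst eq_neg_iff_add_eq_0) (simp add: add.commute)
        then show ?thesis by simp
      qed
      also have "\<dots> = cinner x (m u)" by (simp add: cinner_commute[of x])
      finally show "cinner (?aD x) (a (G u)) = cinner x (m u)" .
    qed
    have pu: "bd_proj ?BG G u = u0"
      by (rule bd_proj_unique[OF LG S0sub uG u0B]) (simp add: u_def w0(1))
    show "u0 \<in> fst ` {(bd_proj ?BG G u, bd_proj ?BD D (a (G u))) | u.
               u \<in> domG \<and> a (G u) \<in> domD \<and> m u - D (a (G u)) = 0}"
      using uG uD pu by (intro image_eqI[of _ _ "(bd_proj ?BG G u, bd_proj ?BD D (a (G u)))"]) auto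
  qed
qed

end
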